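(* Let $(X,Y,A)$ be a random triple with joint distribution $\mathcal{D}$, where $X$ takes values in a measurable space $\mathcal{X}$, $Y\in\{0,1\}$, and $A$ is a discrete random variable with values in $\mathcal{A}$. Let $f:\mathcal{X}\to[0,1]$ be any measurable predictor. Then \[ \mathrm{Suf}_f \le 4\,\mathbb{E}_{A,X}\big[\,|f(X)-f^{\mathrm{Bayes}}_A(X)|\,\big]. \] In particular, if $|\mathcal{A}|<\infty$ and $A$ is uniformly distributed, $\mathcal{D}(A=a)=1/|\mathcal{A}|$ for all $a\in\mathcal{A}$, then \[ \mathrm{Suf}_f \le \frac{4}{|\mathcal{A}|}\sum_{a\in\mathcal{A}} \mathbb{E}_X\big[\,|f(X)-f^{\mathrm{Bayes}}_{A=a}(X)|\;\big|\;A=a\big]. \]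
   Context: The $A$-group Bayes predictor is $f^{\mathrm{Bayes}}_A(X)=\mathbb{E}[Y\mid X,A]$, a function of $(X,A)$; for fixed $a$, $f^{\mathrm{Bayes}}_{A=a}(x)=\mathbb{E}[Y\mid X=x,A=a]$. The group sufficiency gap of a predictor $f$ is $\mathrm{Suf}_f=\mathbb{E}_{A,X}\big[\,|\mathbb{E}[Y\mid f(X)]-\mathbb{E}[Y\mid f(X),A]|\,\big]$, where $\mathbb{E}_{A,X}$ denotes expectation with respect to the marginal distribution of $(A,X)$ under $\mathcal{D}$. *)

theory Defs
  imports "HOL-Probability.Probability"
begin

text \<open>Conditional expectations are realised as functions on the sample space via
  real_cond_exp w.r.t. the sigma-algebra generated by the conditioning variables.\<close>

definition sigma_gen :: "'w measure \<Rightarrow> ('w \<Rightarrow> 'b) \<Rightarrow> 'b measure \<Rightarrow> 'w measure" where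
  "sigma_gen M g N = vimage_algebra (space M) g N"

definition cond_exp_fX :: "'w measure \<Rightarrow> ('w \<Rightarrow> 'x) \<Rightarrow> ('w \<Rightarrow> real) \<Rightarrow> ('x \<Rightarrow> real) \<Rightarrow> ('w \<Rightarrow> real)" where
  "cond_exp_fX M X Y f = real_cond_exp M (sigma_gen M (\<lambda>w. f (X w)) borel) Y"

definition cond_exp_fX_A :: "'w measure \<Rightarrow> ('w \<Rightarrow> 'x) \<Rightarrow> ('w \<Rightarrow> real) \<Rightarrow> ('w \<Rightarrow> 'a) \<Rightarrow> 'a set
    \<Rightarrow> ('x \<Rightarrow> real) \<Rightarrow> ('w \<Rightarrow> real)" where
  "cond_exp_fX_A M X Y A AA f =
     real_cond_exp M (sigma_gen M (\<lambda>w. (f (X w), A w)) (borel \<Otimes>\<^sub>M count_space AA)) Y"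

definition bayes_A :: "'w measure \<Rightarrow> 'x measure \<Rightarrow> ('w \<Rightarrow> 'x) \<Rightarrow> ('w \<Rightarrow> real) \<Rightarrow> ('w \<Rightarrow> 'a) \<Rightarrow> 'a set
    \<Rightarrow> ('w \<Rightarrow> real)" where
  "bayes_A M N X Y A AA = real_cond_exp M (sigma_gen M (\<lambda>w. (X w, A w)) (N \<Otimes>\<^sub>M count_space AA)) Y"

definition suf_gap :: "'w measure \<Rightarrow> ('w \<Rightarrow> 'x) \<Rightarrow> ('w \<Rightarrow> real) \<Rightarrow> ('w \<Rightarrow> 'a) \<Rightarrow> 'a set
    \<Rightarrow> ('x \<Rightarrow> real) \<Rightarrow> real" where
  "suf_gap M X Y A AA f =
     (\<integral>w. \<bar>cond_exp_fX M X Y f w - cond_exp_fX_A M X Y A AA f w\<bar> \<partial>M)"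

definition cond_exp_event :: "'w measure \<Rightarrow> ('w \<Rightarrow> 'a) \<Rightarrow> 'a \<Rightarrow> ('w \<Rightarrow> real) \<Rightarrow> real" where
  "cond_exp_event M A a g =
     (\<integral>w. g w * indicator {w \<in> space M. A w = a} w \<partial>M) / measure M {w \<in> space M. A w = a}"

end

theory Submission
  imports Defs
begin

lemma cond_abs_le:
  assumes "prob_space M" "subalgebra M F" "integrable M h"
  shows "(\<integral>w. \<bar>real_cond_exp M F h w\<bar> \<partial>M) \<le> (\<integral>w. \<bar>h w\<bar> \<partial>M)"
proof -
  interpret prob_space M by fact
  interpret finite_measure_subalgebra M F by unfold_locales (fact assms)
  have cv: "convex_on UNIV (abs :: real \<Rightarrow> real)"
  proof -
    have "convex_on UNIV (\<lambda>x::real. dist 0 x)" by (rule convex_on_dist) simp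
    moreover have "(\<lambda>x::real. dist 0 x) = abs" by (auto simp: dist_real_def)
    ultimately show ?thesis by simp
  qed
  have "AE w in M. \<bar>real_cond_exp M F h w\<bar> \<le> real_cond_exp M F (\<lambda>w. \<bar>h w\<bar>) w"
    using real_cond_exp_jensens_inequality(2)[of h UNIV, where q = abs] assms(3) cv
    by auto
  hence "(\<integral>w. \<bar>real_cond_exp M F h w\<bar> \<partial>M) \<le> (\<integral>w. real_cond_exp M F (\<lambda>w. \<bar>h w\<bar>) w \<partial>M)"
    by (intro integral_mono_AE) (use assms(3) real_cond_exp_int(1) in auto)
  also have "\<dots> = (\<integral>w. \<bar>h w\<bar> \<partial>M)"
    using real_cond_exp_int(2) assms(3) by auto
  finally show ?thesis .
qed

lemma cond_step:
  assumes P: "prob_space M" and G: "subalgebra M G" and GF: "subalgebra G F"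
    and Yi: "integrable M Y" and gi: "integrable M g" and gF: "g \<in> borel_measurable F"
  shows "(\<integral>w. \<bar>real_cond_exp M F Y w - g w\<bar> \<partial>M) \<le> (\<integral>w. \<bar>real_cond_exp M G Y w - g w\<bar> \<partial>M)"
proof -
  interpret prob_space M by fact
  have MF: "subalgebra M F" using G GF unfolding subalgebra_def by auto
  interpret finite_measure_subalgebra M F by unfold_locales (fact MF)
  interpret G: finite_measure_subalgebra M G by unfold_locales (fact G)
  have GYi: "integrable M (real_cond_exp M G Y)" using G.real_cond_exp_int(1)[OF Yi] .
  have gM: "g \<in> borel_measurable M" using gi by auto
  have "AE w in M. real_cond_exp M F (real_cond_exp M G Y) w = real_cond_exp M F Y w"
    using real_cond_exp_nested_subalg[OF G GF Yi] .
  moreover have "AE w in M. real_cond_exp M F (\<lambda>w. real_cond_exp M G Y w - g w) w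
      = real_cond_exp M F (real_cond_exp M G Y) w - real_cond_exp M F g w"
    using real_cond_exp_diff[OF GYi gi] .
  moreover have "AE w in M. real_cond_exp M F g w = g w"
    using real_cond_exp_F_meas[OF gi gF] .
  ultimately have "AE w in M. \<bar>real_cond_exp M F Y w - g w\<bar>
      = \<bar>real_cond_exp M F (\<lambda>w. real_cond_exp M G Y w - g w) w\<bar>" by auto
  hence "(\<integral>w. \<bar>real_cond_exp M F Y w - g w\<bar> \<partial>M)
      = (\<integral>w. \<bar>real_cond_exp M F (\<lambda>w. real_cond_exp M G Y w - g w) w\<bar> \<partial>M)"
    by (intro integral_cong_AE) (use gM in auto)
  also have "\<dots> \<le> (\<integral>w. \<bar>real_cond_exp M G Y w - g w\<bar> \<partial>M)"
    by (rule cond_abs_le[OF P MF]) (use GYi gi in auto)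
  finally show ?thesis .
qed

lemma cond_int:
  assumes "prob_space M" "subalgebra M F" "integrable M Y"
  shows "integrable M (real_cond_exp M F Y)"
proof -
  interpret prob_space M by fact
  interpret finite_measure_subalgebra M F by unfold_locales (fact assms)
  show ?thesis using real_cond_exp_int(1)[OF assms(3)] .
qed

theorem theorem1:
  fixes M :: "'w measure" and N :: "'x measure"
    and X :: "'w \<Rightarrow> 'x" and Y :: "'w \<Rightarrow> real" and A :: "'w \<Rightarrow> 'a" and AA :: "'a set"
    and f :: "'x \<Rightarrow> real"
  assumes "prob_space M"
    and "X \<in> M \<rightarrow>\<^sub>M N"
    and "Y \<in> borel_measurable M" and "\<forall>w\<in>space M. Y w \<in> {0, 1}"
    and "countable AA" and "A \<in> M \<rightarrow>\<^sub>M count_space AA"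
    and "f \<in> borel_measurable N" and "\<forall>x\<in>space N. f x \<in> {0..1}"
  shows "suf_gap M X Y A AA f
           \<le> 4 * (\<integral>w. \<bar>f (X w) - bayes_A M N X Y A AA w\<bar> \<partial>M)
       \<and> ((finite AA \<and> (\<forall>a\<in>AA. measure M {w \<in> space M. A w = a} = 1 / real (card AA))) \<longrightarrow>
           suf_gap M X Y A AA f
             \<le> 4 / real (card AA) *
                (\<Sum>a\<in>AA. cond_exp_event M A a (\<lambda>w. \<bar>f (X w) - bayes_A M N X Y A AA w\<bar>)))"
proof -
  note P = assms(1)
  interpret prob_space M by fact
  have Xm[measurable]: "X \<in> M \<rightarrow>\<^sub>M N" and Am[measurable]: "A \<in> M \<rightarrow>\<^sub>M count_space AA"
    and Ym[measurable]: "Y \<in> borel_measurable M" and fm[measurable]: "f \<in> borel_measurable N"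
    using assms by auto
  define G where "G = sigma_gen M (\<lambda>w. (X w, A w)) (N \<Otimes>\<^sub>M count_space AA)"
  define F1 where "F1 = sigma_gen M (\<lambda>w. f (X w)) borel"
  define F2 where "F2 = sigma_gen M (\<lambda>w. (f (X w), A w)) (borel \<Otimes>\<^sub>M count_space AA)"
  define g where "g = (\<lambda>w. f (X w))"
  define B where "B = real_cond_exp M G Y"
  have hM: "(\<lambda>w. (X w, A w)) \<in> M \<rightarrow>\<^sub>M N \<Otimes>\<^sub>M count_space AA" by measurable
  have hsp: "(\<lambda>w. (X w, A w)) \<in> space M \<rightarrow> space (N \<Otimes>\<^sub>M count_space AA)"
    using measurable_space[OF hM] by auto
  have hG: "(\<lambda>w. (X w, A w)) \<in> G \<rightarrow>\<^sub>M N \<Otimes>\<^sub>M count_space AA"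
    unfolding G_def sigma_gen_def by (rule measurable_vimage_algebra1[OF hsp])
  have spG: "space G = space M" unfolding G_def sigma_gen_def by simp
  have subG: "subalgebra M G"
    unfolding subalgebra_def using sets_image_in_sets[OF refl hM] spG
    by (simp add: G_def sigma_gen_def)
  have gG: "g \<in> G \<rightarrow>\<^sub>M borel"
    using measurable_compose[OF hG, of "\<lambda>p. f (fst p)" borel] by (simp add: g_def)
  have kG: "(\<lambda>w. (f (X w), A w)) \<in> G \<rightarrow>\<^sub>M borel \<Otimes>\<^sub>M count_space AA"
    using measurable_compose[OF hG, of "\<lambda>p. (f (fst p), snd p)" "borel \<Otimes>\<^sub>M count_space AA"] by simp
  have subF1: "subalgebra G F1"
    unfolding subalgebra_def F1_def sigma_gen_def using sets_image_in_sets[OF spG gG] spG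
    by (simp add: g_def)
  have subF2: "subalgebra G F2"
    unfolding subalgebra_def F2_def sigma_gen_def using sets_image_in_sets[OF spG kG] spG
    by simp
  have gF1: "g \<in> borel_measurable F1"
    unfolding F1_def sigma_gen_def g_def by (rule measurable_vimage_algebra1) auto
  have kF2: "(\<lambda>w. (f (X w), A w)) \<in> F2 \<rightarrow>\<^sub>M borel \<Otimes>\<^sub>M count_space AA"
    unfolding F2_def sigma_gen_def
    by (rule measurable_vimage_algebra1) (use measurable_space[OF Am] in \<open>auto simp: space_pair_measure\<close>)
  have gF2: "g \<in> borel_measurable F2"
    using measurable_compose[OF kF2, of fst borel] by (simp add: g_def)
  have Yi: "integrable M Y"
    by (rule integrable_const_bound[where B=1]) (use assms(4) in \<open>auto intro!: AE_I2\<close>)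
  have gi: "integrable M g"
    unfolding g_def
    by (rule integrable_const_bound[where B=1]) (use assms(8) measurable_space[OF Xm] in \<open>auto intro!: AE_I2\<close>)
  have subF1M: "subalgebra M F1" and subF2M: "subalgebra M F2"
    using subG subF1 subF2 unfolding subalgebra_def by auto
  define C1 where "C1 = real_cond_exp M F1 Y"
  define C2 where "C2 = real_cond_exp M F2 Y"
  have C1i: "integrable M C1" unfolding C1_def by (rule cond_int[OF P subF1M Yi])
  have C2i: "integrable M C2" unfolding C2_def by (rule cond_int[OF P subF2M Yi])
  have Bi: "integrable M B" unfolding B_def by (rule cond_int[OF P subG Yi])
  have s1: "(\<integral>w. \<bar>C1 w - g w\<bar> \<partial>M) \<le> (\<integral>w. \<bar>B w - g w\<bar> \<partial>M)"
    unfolding C1_def B_def by (rule cond_step[OF P subG subF1 Yi gi gF1])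
  have s2: "(\<integral>w. \<bar>C2 w - g w\<bar> \<partial>M) \<le> (\<integral>w. \<bar>B w - g w\<bar> \<partial>M)"
    unfolding C2_def B_def by (rule cond_step[OF P subG subF2 Yi gi gF2])
  have suf: "suf_gap M X Y A AA f = (\<integral>w. \<bar>C1 w - C2 w\<bar> \<partial>M)"
    unfolding suf_gap_def cond_exp_fX_def cond_exp_fX_A_def C1_def C2_def F1_def F2_def ..
  have "(\<integral>w. \<bar>C1 w - C2 w\<bar> \<partial>M) \<le> (\<integral>w. \<bar>C1 w - g w\<bar> + \<bar>C2 w - g w\<bar> \<partial>M)"
    by (rule integral_mono) (use C1i C2i gi in auto)
  also have "\<dots> = (\<integral>w. \<bar>C1 w - g w\<bar> \<partial>M) + (\<integral>w. \<bar>C2 w - g w\<bar> \<partial>M)"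
    by (rule Bochner_Integration.integral_add) (use C1i C2i gi in auto)
  also have "\<dots> \<le> 2 * (\<integral>w. \<bar>B w - g w\<bar> \<partial>M)" using s1 s2 by simp
  also have "\<dots> \<le> 4 * (\<integral>w. \<bar>B w - g w\<bar> \<partial>M)"
    using integral_nonneg_AE[of "\<lambda>w. \<bar>B w - g w\<bar>" M] by simp
  also have "(\<integral>w. \<bar>B w - g w\<bar> \<partial>M) = (\<integral>w. \<bar>f (X w) - bayes_A M N X Y A AA w\<bar> \<partial>M)"
    unfolding B_def bayes_A_def G_def g_def by (simp add: abs_minus_commute)
  finally have part1: "suf_gap M X Y A AA f \<le> 4 * (\<integral>w. \<bar>f (X w) - bayes_A M N X Y A AA w\<bar> \<partial>M)"
    using suf by simp
  moreover have "suf_gap M X Y A AA f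
             \<le> 4 / real (card AA) *
                (\<Sum>a\<in>AA. cond_exp_event M A a (\<lambda>w. \<bar>f (X w) - bayes_A M N X Y A AA w\<bar>))"
    if fin: "finite AA" and uni: "\<forall>a\<in>AA. measure M {w \<in> space M. A w = a} = 1 / real (card AA)"
  proof -
    define h where "h = (\<lambda>w. \<bar>f (X w) - bayes_A M N X Y A AA w\<bar>)"
    have hi: "integrable M h"
      unfolding h_def using gi Bi by (simp add: g_def B_def bayes_A_def G_def)
    obtain w0 where "w0 \<in> space M" using not_empty by blast
    hence "A w0 \<in> AA" using measurable_space[OF Am] by auto
    hence ne: "AA \<noteq> {}" by auto
    hence cpos: "real (card AA) > 0" using fin by (simp add: card_gt_0_iff)
    have Sm: "\<And>a. {w \<in> space M. A w = a} \<in> sets M" by measurable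
    have "(\<Sum>a\<in>AA. cond_exp_event M A a h)
        = (\<Sum>a\<in>AA. real (card AA) * (\<integral>w. h w * indicator {w \<in> space M. A w = a} w \<partial>M))"
      unfolding cond_exp_event_def using uni by (intro sum.cong) auto
    also have "\<dots> = real (card AA) * (\<integral>w. (\<Sum>a\<in>AA. h w * indicator {w \<in> space M. A w = a} w) \<partial>M)"
    proof -
      have "(\<integral>w. (\<Sum>a\<in>AA. h w * indicator {w \<in> space M. A w = a} w) \<partial>M)
          = (\<Sum>a\<in>AA. (\<integral>w. h w * indicator {w \<in> space M. A w = a} w \<partial>M))"
      proof (rule Bochner_Integration.integral_sum[where f="\<lambda>a w. h w * indicator {w \<in> space M. A w = a} w"])
        fix a show "integrable M (\<lambda>w. h w * indicator {w \<in> space M. A w = a} w)"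
          using integrable_mult_indicator[OF Sm hi, of a] by (simp add: mult.commute)
      qed
      thus ?thesis by (simp add: sum_distrib_left)
    qed
    also have "(\<integral>w. (\<Sum>a\<in>AA. h w * indicator {w \<in> space M. A w = a} w) \<partial>M) = (\<integral>w. h w \<partial>M)"
    proof (rule Bochner_Integration.integral_cong[OF refl])
      fix w assume w: "w \<in> space M"
      hence Aw: "A w \<in> AA" using measurable_space[OF Am] by auto
      have "(\<Sum>a\<in>AA. h w * indicator {w \<in> space M. A w = a} w) = (\<Sum>a\<in>AA. if A w = a then h w else 0)"
        using w by (intro sum.cong) (auto simp: indicator_def)
      also have "\<dots> = h w" using fin Aw by simp
      finally show "(\<Sum>a\<in>AA. h w * indicator {w \<in> space M. A w = a} w) = h w" .
    qed
    finally have "4 / real (card AA) * (\<Sum>a\<in>AA. cond_exp_event M A a h) = 4 * (\<integral>w. h w \<partial>M)"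
      using cpos by simp
    thus ?thesis using part1 unfolding h_def by simp
  qed
  ultimately show ?thesis by blast
qed

end
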